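(* Let $p,q,\mu_h\in(0,1)$ and $y_0,y_1$, $x_0(y),x_1(y)$ be as in the context, and let $y_b$ be the unique root of the linear function $b(y)=(p\mu_h+\bar p\bar\mu_h)(qy+\bar q)-1$. Then: (i) $1<y_0<y_b<y_1$; (ii) for every real $y$ with $-1\le y\le 1$ we have $x_0(y)<x_1(y)$ and $0<x_0(y)\le 1$; moreover, at $y=0$, $0<x_0(0)<1<x_1(0)$.
   Context: Fix $p,q,\mu_h,\mu_l\in(0,1)$ with $p+q+\mu_h+\mu_l=1$; for real $x$ write $\bar x=1-x$; let $\rho=p/\mu_h+q/\mu_l$ and assume $\rho<1$. Define $a(y)=p\bar\mu_h(qy+\bar q)$, $b(y)=(p\mu_h+\bar p\bar\mu_h)(qy+\bar q)-1$, $c(y)=\bar p\mu_h(qy+\bar q)$ and $\Delta(y)=b(y)^2-4a(y)c(y)=(p\mu_h-\bar p\bar\mu_h)^2(qy+\bar q)^2-2(p\mu_h+\bar p\bar\mu_h)(qy+\bar q)+1$. Its two zeros are $y_0=\frac{p\mu_h+\bar p\bar\mu_h-2\sqrt{p\mu_h\bar p\bar\mu_h}}{(p\mu_h-\bar p\bar\mu_h)^2q}-\frac{\bar q}{q}$ and $y_1=\frac{p\mu_h+\bar p\bar\mu_h+2\sqrt{p\mu_h\bar p\bar\mu_h}}{(p\mu_h-\bar p\bar\mu_h)^2q}-\frac{\bar q}{q}$. Let $\sqrt{\Delta(y)}$ denote the branch analytic on $\mathbb{C}\setminus[y_0,y_1]$ which is positive for real $y<y_0$, and let $x_0(y)=\frac{1-(p\mu_h+\bar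 p\bar\mu_h)(qy+\bar q)-\sqrt{\Delta(y)}}{2p\bar\mu_h(qy+\bar q)}$, $x_1(y)=\frac{1-(p\mu_h+\bar p\bar\mu_h)(qy+\bar q)+\sqrt{\Delta(y)}}{2p\bar\mu_h(qy+\bar q)}$ be the two roots in $x$ of $a(y)x^2+b(y)x+c(y)=0$. *)

theory Defs
  imports "HOL-Analysis.Analysis"
begin

definition bar :: "real \<Rightarrow> real" where
  "bar x = 1 - x"

definition rho :: "real \<Rightarrow> real \<Rightarrow> real \<Rightarrow> real \<Rightarrow> real" where
  "rho p q mh ml = p / mh + q / ml"

definition acoef :: "real \<Rightarrow> real \<Rightarrow> real \<Rightarrow> complex \<Rightarrow> complex" where
  "acoef p q mh y = of_real (p * bar mh) * (of_real q * y + of_real (bar q))"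

definition bcoef :: "real \<Rightarrow> real \<Rightarrow> real \<Rightarrow> complex \<Rightarrow> complex" where
  "bcoef p q mh y = of_real (p * mh + bar p * bar mh) * (of_real q * y + of_real (bar q)) - 1"

definition ccoef :: "real \<Rightarrow> real \<Rightarrow> real \<Rightarrow> complex \<Rightarrow> complex" where
  "ccoef p q mh y = of_real (bar p * mh) * (of_real q * y + of_real (bar q))"

definition Delta :: "real \<Rightarrow> real \<Rightarrow> real \<Rightarrow> complex \<Rightarrow> complex" where
  "Delta p q mh y = (bcoef p q mh y)\<^sup>2 - 4 * acoef p q mh y * ccoef p q mh y"

definition y0 :: "real \<Rightarrow> real \<Rightarrow> real \<Rightarrow> real" where
  "y0 p q mh = (p * mh + bar p * bar mh - 2 * sqrt (p * mh * bar p * bar mh))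
                 / ((p * mh - bar p * bar mh)\<^sup>2 * q) - bar q / q"

definition y1 :: "real \<Rightarrow> real \<Rightarrow> real \<Rightarrow> real" where
  "y1 p q mh = (p * mh + bar p * bar mh + 2 * sqrt (p * mh * bar p * bar mh))
                 / ((p * mh - bar p * bar mh)\<^sup>2 * q) - bar q / q"

text \<open>The roots x_0, x_1, given a value s of the chosen branch of sqrt(Delta(y)).\<close>
definition xroot0 :: "real \<Rightarrow> real \<Rightarrow> real \<Rightarrow> (complex \<Rightarrow> complex) \<Rightarrow> complex \<Rightarrow> complex" where
  "xroot0 p q mh sq y =
     (1 - of_real (p * mh + bar p * bar mh) * (of_real q * y + of_real (bar q)) - sq y)
       / (2 * of_real (p * bar mh) * (of_real q * y + of_real (bar q)))"

definition xroot1 :: "real \<Rightarrow> real \<Rightarrow> real \<Rightarrow> (complex \<Rightarrow> complex) \<Rightarrow> complex \<Rightarrow> complex" where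
  "xroot1 p q mh sq y =
     (1 - of_real (p * mh + bar p * bar mh) * (of_real q * y + of_real (bar q)) + sq y)
       / (2 * of_real (p * bar mh) * (of_real q * y + of_real (bar q)))"

end

theory Submission
  imports Defs
begin

lemma real_notin_seg:
  fixes y u v :: real
  assumes "y < u" "u \<le> v"
  shows "complex_of_real y \<notin> closed_segment (complex_of_real u) (complex_of_real v)"
proof
  assume "complex_of_real y \<in> closed_segment (complex_of_real u) (complex_of_real v)"
  then obtain t where t: "0 \<le> t" "t \<le> 1"
    and e: "complex_of_real y = (1 - t) *\<^sub>R complex_of_real u + t *\<^sub>R complex_of_real v"
    by (auto simp: closed_segment_def)
  have "y = (1 - t) * u + t * v" using arg_cong[OF e, of Re] by simp
  moreover have "t * (v - u) \<ge> 0" using t assms by simp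
  moreover have "(1 - t) * u + t * v = u + t * (v - u)" by (simp add: algebra_simps)
  ultimately show False using assms by simp
qed

lemma key_roots:
  fixes a c u s Dv :: real
  assumes a: "a > 0" and c: "c > 0" and s: "0 < s" "s \<le> 1"
    and u: "u = 1 - (1 - a - c) * s" and Dv: "Dv > 0" "Dv^2 = u^2 - 4 * a * c * s^2"
  shows "0 < (u - Dv)/(2 * a * s) \<and> (u - Dv)/(2 * a * s) \<le> 1 \<and> 1 \<le> (u + Dv)/(2 * a * s)
     \<and> (s < 1 \<longrightarrow> (u - Dv)/(2 * a * s) < 1 \<and> 1 < (u + Dv)/(2 * a * s))"
proof -
  have as: "2 * a * s > 0" using a s by simp
  have "(1 - a - c) * s < 1"
  proof (cases "1 - a - c \<le> 0")
    case True
    hence "(1 - a - c) * s \<le> 0" using s by (simp add: mult_nonpos_nonneg)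
    thus ?thesis by simp
  next
    case False
    hence "(1 - a - c) * s \<le> (1 - a - c) * 1" using s mult_left_mono[of s 1 "1 - a - c"] by simp
    thus ?thesis using a c by simp
  qed
  hence up: "u > 0" using u by simp
  have "4 * a * c * s^2 > 0" using a c s by simp
  hence "Dv^2 < u^2" using Dv(2) by linarith
  hence Du: "Dv < u" using up power2_less_imp_less[of Dv u] by auto
  have g0: "(u - 2 * a * s)^2 - (u^2 - 4 * a * c * s^2) = 4 * a * s * (s * (a+c) - u)"
    by (simp add: power2_eq_square algebra_simps)
  have g: "(u - 2 * a * s)^2 - Dv^2 = 4 * a * s * (s * (a+c) - u)" using g0 Dv(2) by simp
  have h: "s * (a+c) - u = s - 1" unfolding u by (simp add: algebra_simps)
  have l1: "u - Dv \<le> 2 * a * s"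
  proof (cases "u - 2 * a * s \<le> 0")
    case True then show ?thesis using Dv(1) by simp
  next
    case False
    have "4 * a * s * (s - 1) \<le> 0" using a s mult_nonneg_nonpos[of "4 * a * s" "s - 1"] by auto
    hence "(u - 2 * a * s)^2 \<le> Dv^2" using g h by simp
    hence "u - 2 * a * s \<le> Dv" using Dv False power2_le_imp_le[of "u - 2 * a * s" Dv] by auto
    then show ?thesis by simp
  qed
  have l2: "2 * a * s \<le> u + Dv"
  proof (cases "2 * a * s - u \<le> 0")
    case True then show ?thesis using Dv(1) by simp
  next
    case False
    have "4 * a * s * (s - 1) \<le> 0" using a s mult_nonneg_nonpos[of "4 * a * s" "s - 1"] by auto
    hence "(u - 2 * a * s)^2 \<le> Dv^2" using g h by simp
    hence "2 * a * s - u \<le> Dv" using Dv False power2_le_imp_le[of "2 * a * s - u" Dv] by (auto simp: power2_commute)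
    then show ?thesis by simp
  qed
  have l3: "s < 1 \<longrightarrow> u - Dv < 2 * a * s \<and> 2 * a * s < u + Dv"
  proof
    assume s1: "s < 1"
    have "4 * a * s * (s - 1) < 0" using a s s1 mult_pos_neg[of "4 * a * s" "s - 1"] by auto
    hence lt: "(u - 2 * a * s)^2 < Dv^2" using g h by simp
    have "u - 2 * a * s < Dv"
    proof (cases "u - 2 * a * s \<le> 0")
      case True then show ?thesis using Dv(1) by simp
    next
      case False then show ?thesis using lt Dv power2_less_imp_less[of "u - 2 * a * s" Dv] by auto
    qed
    moreover have "2 * a * s - u < Dv"
    proof (cases "2 * a * s - u \<le> 0")
      case True then show ?thesis using Dv(1) by simp
    next
      case False then show ?thesis using lt Dv power2_less_imp_less[of "2 * a * s - u" Dv] by (auto simp: power2_commute)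
    qed
    ultimately show "u - Dv < 2 * a * s \<and> 2 * a * s < u + Dv" by simp
  qed
  have e1: "0 < (u - Dv)/(2 * a * s)" using Du as by simp
  have e2: "(u - Dv)/(2 * a * s) \<le> 1" using l1 as by (simp add: pos_divide_le_eq)
  have e3: "1 \<le> (u + Dv)/(2 * a * s)" using l2 as by (simp add: pos_le_divide_eq)
  have e4: "s < 1 \<longrightarrow> (u - Dv)/(2 * a * s) < 1 \<and> 1 < (u + Dv)/(2 * a * s)"
    using l3 as by (simp add: pos_divide_less_eq pos_less_divide_eq)
  show ?thesis using e1 e2 e3 e4 by blast
qed

theorem lemma3p1:
  fixes p q mh ml yb :: real and sq :: "complex \<Rightarrow> complex"
  assumes hp: "0 < p" "p < 1" and hq: "0 < q" "q < 1"
    and hmh: "0 < mh" "mh < 1" and hml: "0 < ml" "ml < 1"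
    and hsum: "p + q + mh + ml = 1"
    and hrho: "rho p q mh ml < 1"
    and hyb: "bcoef p q mh (complex_of_real yb) = 0"
    and hol: "sq holomorphic_on
               (- closed_segment (complex_of_real (y0 p q mh)) (complex_of_real (y1 p q mh)))"
    and sq_sq: "\<forall>z \<in> - closed_segment (complex_of_real (y0 p q mh)) (complex_of_real (y1 p q mh)).
                  (sq z)\<^sup>2 = Delta p q mh z"
    and sq_pos: "\<forall>y::real. y < y0 p q mh \<longrightarrow>
                  Im (sq (complex_of_real y)) = 0 \<and> Re (sq (complex_of_real y)) > 0"
  shows "(1 < y0 p q mh \<and> y0 p q mh < yb \<and> yb < y1 p q mh) \<and>
         (\<forall>y::real. -1 \<le> y \<and> y \<le> 1 \<longrightarrow>
           xroot0 p q mh sq (complex_of_real y) \<in> \<real> \<and>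
           xroot1 p q mh sq (complex_of_real y) \<in> \<real> \<and>
           Re (xroot0 p q mh sq (complex_of_real y)) < Re (xroot1 p q mh sq (complex_of_real y)) \<and>
           0 < Re (xroot0 p q mh sq (complex_of_real y)) \<and>
           Re (xroot0 p q mh sq (complex_of_real y)) \<le> 1) \<and>
         (xroot0 p q mh sq 0 \<in> \<real> \<and> xroot1 p q mh sq 0 \<in> \<real> \<and>
         0 < Re (xroot0 p q mh sq 0) \<and> Re (xroot0 p q mh sq 0) < 1 \<and>
         1 < Re (xroot1 p q mh sq 0))"
proof -
  define A where "A = p * mh"
  define B where "B = bar p * bar mh"
  define a where "a = p * bar mh"
  define c where "c = bar p * mh"
  define r where "r = sqrt (p * mh * bar p * bar mh)"
  have pm: "p < mh"
  proof -
    have "q / ml > 0" using hq hml by simp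
    hence "p / mh < 1" using hrho unfolding rho_def by simp
    thus ?thesis using hmh by (simp add: divide_simps)
  qed
  have "q / ml < 1"
  proof -
    have "p / mh > 0" using hp hmh by simp
    thus ?thesis using hrho unfolding rho_def by simp
  qed
  hence "q < ml" using hml by (simp add: divide_simps)
  hence pm2: "p + mh < 1" "q < 1/2" using hsum hq hml hp hmh by auto
  have Ap: "A > 0" "B > 0" "a > 0" "c > 0"
    using hp hmh unfolding A_def B_def a_def c_def bar_def by auto
  have sum1: "A + B + a + c = 1" unfolding A_def B_def a_def c_def bar_def by (simp add: algebra_simps)
  have bp: "bar p > 0" "bar mh > 0" using hp hmh unfolding bar_def by auto
  have prodpos: "0 < p * mh * bar p * bar mh" using hp hmh bp by (intro mult_pos_pos) auto
  have r0: "r \<ge> 0" unfolding r_def using prodpos by simp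
  have r2: "r^2 = A * B" unfolding r_def A_def B_def
    using prodpos by (simp add: mult.assoc)
  have ABac: "A * B = a * c" unfolding A_def B_def a_def c_def by (simp only: mult_ac)
  have ac: "a \<noteq> c"
  proof
    assume "a = c"
    hence "p - p * mh = mh - p * mh" unfolding a_def c_def bar_def by (simp add: algebra_simps)
    thus False using pm by simp
  qed
  have "4 * r^2 < (a+c)^2" using r2 ABac ac
  proof -
    have "(a-c)^2 > 0" using ac by simp
    moreover have "(a+c)^2 - 4 * (a * c) = (a-c)^2" by (simp add: power2_eq_square algebra_simps)
    ultimately have "4 * (a * c) < (a+c)^2" by linarith
    thus ?thesis using r2 ABac by simp
  qed
  hence r_lt: "2 * r < a + c" using r0 Ap power2_less_imp_less[of "2 * r" "a + c"]
    by (auto simp: power_mult_distrib)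
  have AB_ne: "A \<noteq> B"
  proof -
    have "p < bar mh" "mh < bar p" using pm2 unfolding bar_def by auto
    hence "p * mh < bar p * bar mh" using hp hmh mult_strict_mono[of p "bar mh" mh "bar p"] by (simp add: mult.commute)
    thus ?thesis unfolding A_def B_def by simp
  qed
  have ABsq: "(A - B)^2 = (A+B-2 * r) * (A+B+2 * r)" using r2 by (simp add: power2_eq_square algebra_simps)
  have ABpos: "(A-B)^2 > 0" using AB_ne by simp
  have rlo: "2 * r < A + B"
  proof -
    have "(A+B)^2 - (2 * r)^2 = (A-B)^2" using r2 by (simp add: power2_eq_square algebra_simps)
    hence "(2 * r)^2 < (A+B)^2" using ABpos by linarith
    thus ?thesis using Ap r0 power2_less_imp_less[of "2 * r" "A + B"] by (auto simp: power_mult_distrib)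
  qed
  define s0 where "s0 = 1/(A+B+2 * r)"
  define s1 where "s1 = 1/(A+B-2 * r)"
  have y0u: "y0 p q mh = (A + B - 2 * r) / ((A - B)^2 * q) - bar q / q"
    unfolding y0_def A_def B_def r_def by (rule refl)
  have y1u: "y1 p q mh = (A + B + 2 * r) / ((A - B)^2 * q) - bar q / q"
    unfolding y1_def A_def B_def r_def by (rule refl)
  have n1: "A + B - 2 * r > 0" "A + B + 2 * r > 0" using rlo r0 Ap by auto
  have "(A + B - 2 * r) / ((A - B)^2 * q) = (A + B - 2 * r) / ((A + B - 2 * r) * ((A + B + 2 * r) * q))"
    unfolding ABsq by (simp only: mult_ac)
  also have "\<dots> = 1 / ((A + B + 2 * r) * q)" using n1 by simp
  also have "\<dots> = s0 / q" unfolding s0_def by simp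
  finally have "(A + B - 2 * r) / ((A - B)^2 * q) = s0 / q" .
  hence y0e: "y0 p q mh = (s0 - bar q)/q" unfolding y0u by (simp add: diff_divide_distrib)
  have "(A + B + 2 * r) / ((A - B)^2 * q) = (A + B + 2 * r) / ((A + B + 2 * r) * ((A + B - 2 * r) * q))"
    unfolding ABsq by (simp only: mult_ac)
  also have "\<dots> = 1 / ((A + B - 2 * r) * q)" using n1 by simp
  also have "\<dots> = s1 / q" unfolding s1_def by simp
  finally have "(A + B + 2 * r) / ((A - B)^2 * q) = s1 / q" .
  hence y1e: "y1 p q mh = (s1 - bar q)/q" unfolding y1u by (simp add: diff_divide_distrib)
  have ybe: "(A+B) * (q * yb + bar q) = 1"
  proof -
    have "Re (bcoef p q mh (complex_of_real yb)) = 0" using hyb by simp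
    thus ?thesis unfolding bcoef_def A_def B_def by simp
  qed
  have sb: "q * yb + bar q = 1/(A+B)" using ybe Ap by (simp add: divide_simps mult.commute)
  have lt1: "A+B+2 * r < 1" using r_lt sum1 by simp
  have s0g: "s0 > 1" unfolding s0_def using lt1 Ap r0 by simp
  have rp: "r > 0" unfolding r_def using prodpos by simp
  have s0b: "s0 < 1/(A+B)" unfolding s0_def using Ap rp divide_strict_left_mono[of "A+B" "A+B+2 * r" 1]
    by simp
  have s1b: "1/(A+B) < s1" unfolding s1_def using Ap rp rlo divide_strict_left_mono[of "A+B-2 * r" "A+B" 1]
    by simp
  have bq: "bar q = 1 - q" by (simp add: bar_def)
  have y0g: "1 < y0 p q mh" unfolding y0e bq using s0g hq by (simp add: divide_simps)
  have "s0 - bar q < q * yb" using sb s0b by linarith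
  hence y0yb: "y0 p q mh < yb" unfolding y0e using hq
    by (simp add: pos_divide_less_eq mult.commute)
  have "q * yb < s1 - bar q" using sb s1b by linarith
  hence yby1: "yb < y1 p q mh" unfolding y1e using hq
    by (simp add: pos_less_divide_eq mult.commute)
  have y01: "y0 p q mh \<le> y1 p q mh" using y0yb yby1 by simp
  have main: "xroot0 p q mh sq (complex_of_real y) \<in> \<real> \<and>
           xroot1 p q mh sq (complex_of_real y) \<in> \<real> \<and>
           Re (xroot0 p q mh sq (complex_of_real y)) < Re (xroot1 p q mh sq (complex_of_real y)) \<and>
           0 < Re (xroot0 p q mh sq (complex_of_real y)) \<and>
           Re (xroot0 p q mh sq (complex_of_real y)) \<le> 1 \<and>
           (y < 1 \<longrightarrow> Re (xroot0 p q mh sq (complex_of_real y)) < 1 \<and>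
              1 < Re (xroot1 p q mh sq (complex_of_real y)))"
    if hy: "-1 \<le> y" "y \<le> 1" for y
  proof -
    define s where "s = q * y + bar q"
    define d where "d = Re (sq (complex_of_real y))"
    have yl: "y < y0 p q mh" using hy y0g by simp
    have sqe: "sq (complex_of_real y) = complex_of_real d"
      using sq_pos yl unfolding d_def by (simp add: complex_eq_iff)
    have dpos: "d > 0" using sq_pos yl unfolding d_def by simp
    have "complex_of_real y \<in> - closed_segment (complex_of_real (y0 p q mh)) (complex_of_real (y1 p q mh))"
      using real_notin_seg[OF yl y01] by simp
    hence "(sq (complex_of_real y))\<^sup>2 = Delta p q mh (complex_of_real y)" using sq_sq by blast
    hence "complex_of_real (d^2) = complex_of_real (((A+B) * s - 1)^2 - 4 * (a * s) * (c * s))"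
      unfolding sqe Delta_def bcoef_def acoef_def ccoef_def A_def B_def a_def c_def s_def
      by simp
    hence "d^2 = ((A+B) * s - 1)^2 - 4 * (a * s) * (c * s)"
      by (simp only: of_real_eq_iff)
    moreover have "A + B = 1 - a - c" using sum1 by simp
    ultimately have "d^2 = ((1 - a - c) * s - 1)^2 - 4 * (a * s) * (c * s)" by simp
    hence d2: "d^2 = (1 - (1-a-c) * s)^2 - 4 * a * c * s^2"
      by (simp add: power2_eq_square algebra_simps)
    have "q * (-1) \<le> q * y" "q * y \<le> q * 1" using hy hq mult_left_mono[of "-1" y q] mult_left_mono[of y 1 q] by simp_all
    hence s_pos: "0 < s" "s \<le> 1" unfolding s_def bq using pm2 by auto
    have s_lt: "y < 1 \<longrightarrow> s < 1" unfolding s_def bq using hq by simp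
    have ABe: "p * mh + bar p * bar mh = 1 - a - c" using sum1 A_def B_def by simp
    have cs: "complex_of_real q * complex_of_real y + complex_of_real (bar q) = complex_of_real s"
      unfolding s_def by simp
    have x0e: "xroot0 p q mh sq (complex_of_real y) =
       complex_of_real ((1 - (1-a-c) * s - d)/(2 * a * s))"
      unfolding xroot0_def sqe ABe cs a_def[symmetric]
      by (simp only: of_real_divide of_real_mult of_real_diff of_real_add of_real_1 of_real_numeral)
    have x1e: "xroot1 p q mh sq (complex_of_real y) =
       complex_of_real ((1 - (1-a-c) * s + d)/(2 * a * s))"
      unfolding xroot1_def sqe ABe cs a_def[symmetric]
      by (simp only: of_real_divide of_real_mult of_real_diff of_real_add of_real_1 of_real_numeral)
    have K: "0 < (1 - (1-a-c) * s - d)/(2 * a * s) \<and> (1 - (1-a-c) * s - d)/(2 * a * s) \<le> 1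
       \<and> 1 \<le> (1 - (1-a-c) * s + d)/(2 * a * s)
       \<and> (s < 1 \<longrightarrow> (1 - (1-a-c) * s - d)/(2 * a * s) < 1 \<and> 1 < (1 - (1-a-c) * s + d)/(2 * a * s))"
      using key_roots[OF Ap(3) Ap(4) s_pos refl dpos d2] .
    have lt: "(1 - (1-a-c) * s - d)/(2 * a * s) < (1 - (1-a-c) * s + d)/(2 * a * s)"
      using dpos Ap s_pos divide_strict_right_mono[of "1 - (1-a-c) * s - d" "1 - (1-a-c) * s + d" "2 * a * s"]
      by simp
    show ?thesis unfolding x0e x1e Re_complex_of_real using K s_lt lt Reals_of_real by blast
  qed
  have m0: "xroot0 p q mh sq 0 \<in> \<real> \<and> xroot1 p q mh sq 0 \<in> \<real> \<and>
         0 < Re (xroot0 p q mh sq 0) \<and> Re (xroot0 p q mh sq 0) < 1 \<and>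
         1 < Re (xroot1 p q mh sq 0)"
    using main[of 0] by auto
  show ?thesis using y0g y0yb yby1 main m0 by blast
qed

end
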